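(* Let $\mathbf V$ be an $n$-dimensional $\mathbb Q(v,t)$-vector space with basis $\mathbf v_1,\dots,\mathbf v_n$, and for $\mathbf r=(r_1,\dots,r_d)\in[1,n]^d$ write $\mathbf v_{\mathbf r}=\mathbf v_{r_1}\otimes\cdots\otimes\mathbf v_{r_d}$. The formula, for $1\le j\le d-1$, $$\mathbf v_{r_1\cdots r_d}T_j=\begin{cases}\mathbf v_{r_1\cdots r_{j-1}r_{j+1}r_j\cdots r_d}, & r_j<r_{j+1},\\ vt\,\mathbf v_{r_1\cdots r_d}, & r_j=r_{j+1},\\ (vt-v^{-1}t)\mathbf v_{r_1\cdots r_d}+t^2\mathbf v_{r_1\cdots r_{j-1}r_{j+1}r_j\cdots r_d}, & r_j>r_{j+1},\end{cases}$$ extended linearly, defines a right action of $H_d(v,t)$ on $\mathbf V^{\otimes d}$.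
   Context: The two-parameter Iwahori–Hecke algebra $H_d(v,t)$ is the unital associative $\mathbb Q(v,t)$-algebra generated by $T_1,\dots,T_{d-1}$ subject to $T_i^2=(vt-v^{-1}t)T_i+t^2$ ($1\le i\le d-1$), $T_jT_{j+1}T_j=T_{j+1}T_jT_{j+1}$ ($1\le j\le d-2$), $T_iT_j=T_jT_i$ ($|i-j|>1$). *)

theory Defs
  imports "HOL-Computational_Algebra.Polynomial" "HOL-Computational_Algebra.Fraction_Field"
begin

text \<open>The field Q(v,t), realised as the fraction field of Q[v][t].\<close>
type_synonym Qvt = "rat poly poly fract"

definition qv :: Qvt where "qv = Fract [:[:0, 1:]:] 1"
definition qt :: Qvt where "qt = Fract [:0, 1:] 1"

text \<open>Index set [1,n]^d of basis tensors v_r, r = (r_1,...,r_d) stored as a list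
  (r_k = r ! (k-1)).\<close>
definition tuples :: "nat \<Rightarrow> nat \<Rightarrow> nat list set" where
  "tuples n d = {r. length r = d \<and> set r \<subseteq> {1..n}}"

text \<open>V^{\<otimes>d}: vectors are coefficient functions supported on tuples n d.\<close>
definition tensor_space :: "nat \<Rightarrow> nat \<Rightarrow> (nat list \<Rightarrow> 'a::field) set" where
  "tensor_space n d = {x. \<forall>r. r \<notin> tuples n d \<longrightarrow> x r = 0}"

definition bvec :: "nat list \<Rightarrow> (nat list \<Rightarrow> 'a::field)" where
  "bvec r = (\<lambda>s. if s = r then 1 else 0)"

text \<open>Swap positions j and j+1 (1-based) of r.\<close>
definition swp :: "nat \<Rightarrow> nat list \<Rightarrow> nat list" where
  "swp j r = r[j - 1 := r ! j, j := r ! (j - 1)]"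

definition basis_act :: "'a::field \<Rightarrow> 'a \<Rightarrow> nat \<Rightarrow> nat list \<Rightarrow> (nat list \<Rightarrow> 'a)" where
  "basis_act v t j r =
     (if r ! (j - 1) < r ! j then bvec (swp j r)
      else if r ! (j - 1) = r ! j then (\<lambda>s. v * t * bvec r s)
      else (\<lambda>s. (v * t - inverse v * t) * bvec r s + t ^ 2 * bvec (swp j r) s))"

definition act :: "'a::field \<Rightarrow> 'a \<Rightarrow> nat \<Rightarrow> nat \<Rightarrow> nat \<Rightarrow> (nat list \<Rightarrow> 'a) \<Rightarrow> (nat list \<Rightarrow> 'a)" where
  "act v t n d j x = (\<lambda>s. \<Sum>r\<in>tuples n d. x r * basis_act v t j r s)"

end

theory Submission
  imports Defs
begin

definition A :: "'a::field \<Rightarrow> 'a \<Rightarrow> nat list set \<Rightarrow> nat \<Rightarrow> (nat list \<Rightarrow> 'a) \<Rightarrow> nat list \<Rightarrow> 'a" where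
  "A v t U j x = (\<lambda>s. \<Sum>r\<in>U. x r * basis_act v t j r s)"

lemma A_bvec: "finite U \<Longrightarrow> r \<in> U \<Longrightarrow> A v t U j (bvec r) = basis_act v t j r"
proof (rule ext)
  fix s assume "finite U" "r \<in> U"
  have "(\<Sum>ra\<in>U. bvec r ra * basis_act v t j ra s) = (\<Sum>ra\<in>U. if r = ra then basis_act v t j ra s else 0)"
    by (rule sum.cong) (auto simp: bvec_def)
  also have "\<dots> = basis_act v t j r s" using \<open>finite U\<close> \<open>r \<in> U\<close> by (simp add: sum.delta)
  finally show "A v t U j (bvec r) s = basis_act v t j r s" unfolding A_def .
qed

lemma A_lin2: "A v t U j (\<lambda>s. a * f s + b * g s) = (\<lambda>s. a * A v t U j f s + b * A v t U j g s)"
  unfolding A_def by (rule ext) (simp add: distrib_right sum.distrib sum_distrib_left mult.assoc)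

lemma A_lin1: "A v t U j (\<lambda>s. a * f s) = (\<lambda>s. a * A v t U j f s)"
  unfolding A_def by (rule ext) (simp add: sum_distrib_left mult.assoc)

lemma A_if: "A v t U j (if P then f else g) = (if P then A v t U j f else A v t U j g)"
  by simp

lemma A_sum: "A v t U j (\<lambda>s. \<Sum>r\<in>U. c r * g r s) = (\<lambda>s. \<Sum>r\<in>U. c r * A v t U j (g r) s)"
  unfolding A_def by (rule ext) (simp add: sum_distrib_left sum_distrib_right mult.assoc, rule sum.swap)

lemma braid_basis:
  fixes v t :: "'a::field"
  assumes v: "v \<noteq> 0" and U: "finite U"
  and PU: "\<And>x y z. x\<in>S \<Longrightarrow> y\<in>S \<Longrightarrow> z\<in>S \<Longrightarrow> P x y z \<in> U"
  and s1: "\<And>x y z. swp i (P x y z) = P y x z" and s2: "\<And>x y z. swp (Suc i) (P x y z) = P x z y"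
  and n1: "\<And>x y z. P x y z ! (i - 1) = x" and n2: "\<And>x y z. P x y z ! i = y"
  and n3: "\<And>x y z. P x y z ! Suc i = z"
  and abc: "a \<in> S" "b \<in> S" "c \<in> S"
  shows "A v t U i (A v t U (Suc i) (A v t U i (bvec (P a b c))))
       = A v t U (Suc i) (A v t U i (A v t U (Suc i) (bvec (P a b c))))"
proof -
  have B: "\<And>k x y z. x\<in>S \<Longrightarrow> y\<in>S \<Longrightarrow> z\<in>S \<Longrightarrow> A v t U k (bvec (P x y z)) = basis_act v t k (P x y z)"
    using A_bvec[OF U PU] by blast
  show ?thesis
    apply (cases a b rule: linorder_cases; cases b c rule: linorder_cases; cases a c rule: linorder_cases)
    apply (simp_all add: B abc basis_act_def s1 s2 n1[simplified] n2 n3 A_lin1 A_lin2)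
    apply (simp_all add: fun_eq_iff algebra_simps v)
    apply (simp_all add: field_simps v power2_eq_square)
    done
qed

lemma far_basis:
  fixes v t :: "'a::field"
  assumes v: "v \<noteq> 0" and U: "finite U"
  and PU: "\<And>x y z w. x\<in>S \<Longrightarrow> y\<in>S \<Longrightarrow> z\<in>S \<Longrightarrow> w\<in>S \<Longrightarrow> P x y z w \<in> U"
  and s1: "\<And>x y z w. swp i (P x y z w) = P y x z w" and s2: "\<And>x y z w. swp j (P x y z w) = P x y w z"
  and n1: "\<And>x y z w. P x y z w ! (i - 1) = x" and n2: "\<And>x y z w. P x y z w ! i = y"
  and n3: "\<And>x y z w. P x y z w ! (j - 1) = z" and n4: "\<And>x y z w. P x y z w ! j = w"
  and abc: "a \<in> S" "b \<in> S" "c \<in> S" "e \<in> S"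
  shows "A v t U i (A v t U j (bvec (P a b c e))) = A v t U j (A v t U i (bvec (P a b c e)))"
proof -
  have B: "\<And>k x y z w. x\<in>S \<Longrightarrow> y\<in>S \<Longrightarrow> z\<in>S \<Longrightarrow> w\<in>S \<Longrightarrow> A v t U k (bvec (P x y z w)) = basis_act v t k (P x y z w)"
    using A_bvec[OF U PU] by blast
  show ?thesis
    apply (simp add: B abc basis_act_def s1 s2 n1[simplified] n2 n3[simplified] n4 A_lin1 A_lin2 A_if)
    apply (cases a b rule: linorder_cases; cases c e rule: linorder_cases)
    apply (simp_all add: fun_eq_iff field_simps v)
    done
qed

lemma quad_basis:
  fixes v t :: "'a::field"
  assumes v: "v \<noteq> 0" and U: "finite U"
  and PU: "\<And>x y. x\<in>S \<Longrightarrow> y\<in>S \<Longrightarrow> P x y \<in> U"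
  and s1: "\<And>x y. swp i (P x y) = P y x"
  and n1: "\<And>x y. P x y ! (i - 1) = x" and n2: "\<And>x y. P x y ! i = y"
  and abc: "a \<in> S" "b \<in> S"
  shows "A v t U i (A v t U i (bvec (P a b))) = (\<lambda>s. (v * t - inverse v * t) * A v t U i (bvec (P a b)) s + t ^ 2 * bvec (P a b) s)"
proof -
  have B: "\<And>k x y. x\<in>S \<Longrightarrow> y\<in>S \<Longrightarrow> A v t U k (bvec (P x y)) = basis_act v t k (P x y)"
    using A_bvec[OF U PU] by blast
  show ?thesis
    apply (simp add: B abc basis_act_def s1 n1[simplified] n2 A_lin1 A_lin2 A_if)
    apply (cases a b rule: linorder_cases)
    apply (simp_all add: fun_eq_iff field_simps v power2_eq_square)
    done
qed

lemma P3:
  assumes "1 \<le> i" "Suc i < length r"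
  shows "swp i (r[i-1:=x, i:=y, Suc i:=z]) = r[i-1:=y, i:=x, Suc i:=z]"
    "swp (Suc i) (r[i-1:=x, i:=y, Suc i:=z]) = r[i-1:=x, i:=z, Suc i:=y]"
    "r[i-1:=x, i:=y, Suc i:=z] ! (i-1) = x"
    "r[i-1:=x, i:=y, Suc i:=z] ! i = y"
    "r[i-1:=x, i:=y, Suc i:=z] ! Suc i = z"
  using assms by (auto simp: swp_def nth_list_update list_update_swap)

lemma P4:
  assumes "1 \<le> i" "Suc i < j" "j < length r"
  shows "swp i (r[i-1:=x, i:=y, j-1:=z, j:=w]) = r[i-1:=y, i:=x, j-1:=z, j:=w]"
    "swp j (r[i-1:=x, i:=y, j-1:=z, j:=w]) = r[i-1:=x, i:=y, j-1:=w, j:=z]"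
    "r[i-1:=x, i:=y, j-1:=z, j:=w] ! (i-1) = x"
    "r[i-1:=x, i:=y, j-1:=z, j:=w] ! i = y"
    "r[i-1:=x, i:=y, j-1:=z, j:=w] ! (j-1) = z"
    "r[i-1:=x, i:=y, j-1:=z, j:=w] ! j = w"
  using assms by (auto simp: swp_def nth_list_update list_update_swap)

lemma P2:
  assumes "1 \<le> i" "i < length r"
  shows "swp i (r[i-1:=x, i:=y]) = r[i-1:=y, i:=x]"
    "r[i-1:=x, i:=y] ! (i-1) = x"
    "r[i-1:=x, i:=y] ! i = y"
  using assms by (auto simp: swp_def nth_list_update list_update_swap)

lemma finite_tuples: "finite (tuples n d)"
proof -
  have "tuples n d = {xs. set xs \<subseteq> {1..n} \<and> length xs = d}" unfolding tuples_def by auto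
  then show ?thesis using finite_lists_length_eq[of "{1..n}" d] by simp
qed

lemma upd_tuples: "r \<in> tuples n d \<Longrightarrow> x \<in> {1..n} \<Longrightarrow> r[k:=x] \<in> tuples n d"
  unfolding tuples_def using set_update_subset_insert[of r k x] by auto

lemma nth_tuples: "r \<in> tuples n d \<Longrightarrow> k < d \<Longrightarrow> r ! k \<in> {1..n}"
proof -
  assume a: "r \<in> tuples n d" "k < d"
  then have "r ! k \<in> set r" unfolding tuples_def by auto
  with a show ?thesis unfolding tuples_def by blast
qed

lemma swp_tuples: "r \<in> tuples n d \<Longrightarrow> 1 \<le> j \<Longrightarrow> j < d \<Longrightarrow> swp j r \<in> tuples n d"
  unfolding swp_def by (intro upd_tuples nth_tuples) auto

lemma expand:
  assumes "x \<in> tensor_space n d"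
  shows "x = (\<lambda>s. \<Sum>r\<in>tuples n d. x r * bvec r s)"
proof (rule ext)
  fix s
  have "(\<Sum>r\<in>tuples n d. x r * bvec r s) = (\<Sum>r\<in>tuples n d. if s = r then x r else 0)"
    by (rule sum.cong) (auto simp: bvec_def)
  also have "\<dots> = x s" using assms finite_tuples[of n d]
    by (simp add: sum.delta tensor_space_def)
  finally show "x s = (\<Sum>r\<in>tuples n d. x r * bvec r s)" ..
qed

lemma qv_nz: "qv \<noteq> 0"
  unfolding qv_def by (simp add: Zero_fract_def eq_fract)

theorem mainTheorem8:
  fixes n d :: nat
  defines "T \<equiv> act qv qt n d"
  shows
    "(\<forall>j x. 1 \<le> j \<and> j \<le> d - 1 \<and> x \<in> tensor_space n d \<longrightarrow>
        T j x \<in> tensor_space n d)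
   \<and> (\<forall>i j x. 1 \<le> i \<and> i \<le> d - 1 \<and> 1 \<le> j \<and> j \<le> d - 1 \<and> x \<in> tensor_space n d \<longrightarrow>
        T i (T i x) = (\<lambda>s. (qv * qt - inverse qv * qt) * T i x s + qt ^ 2 * x s)
        \<and> (j = i + 1 \<longrightarrow> T i (T j (T i x)) = T j (T i (T j x)))
        \<and> ((i + 1 < j \<or> j + 1 < i) \<longrightarrow> T i (T j x) = T j (T i x)))"
proof -
  define U where "U = tuples n d"
  have fU: "finite U" unfolding U_def by (rule finite_tuples)
  have TA: "T = A qv qt U" unfolding T_def U_def by (simp add: act_def A_def fun_eq_iff)
  have B: "\<And>k r. r \<in> U \<Longrightarrow> T k (bvec r) = basis_act qv qt k r"
    unfolding TA by (rule A_bvec[OF fU])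
  have S: "\<And>k c g. T k (\<lambda>s. \<Sum>r\<in>U. c r * g r s) = (\<lambda>s. \<Sum>r\<in>U. c r * T k (g r) s)"
    unfolding TA by (rule A_sum)
  have part1: "T j x \<in> tensor_space n d" if j: "1 \<le> j" "j \<le> d - 1" and x: "x \<in> tensor_space n d" for j x
  proof -
    have "T j x s = 0" if s: "s \<notin> U" for s
    proof -
      have "T j x s = (\<Sum>r\<in>U. x r * basis_act qv qt j r s)" unfolding TA A_def by simp
      also have "\<dots> = 0"
      proof (rule sum.neutral, rule ballI)
        fix r assume r: "r \<in> U"
        have "swp j r \<in> U" using swp_tuples[of r n d j] r j unfolding U_def by auto
        then have "bvec r s = (0::Qvt)" "bvec (swp j r) s = (0::Qvt)" using r s by (auto simp: bvec_def)
        then show "x r * basis_act qv qt j r s = 0" unfolding basis_act_def by simp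
      qed
      finally show ?thesis .
    qed
    then show ?thesis unfolding tensor_space_def U_def by auto
  qed
  have part2: "T i (T i x) = (\<lambda>s. (qv * qt - inverse qv * qt) * T i x s + qt ^ 2 * x s)
        \<and> (j = i + 1 \<longrightarrow> T i (T j (T i x)) = T j (T i (T j x)))
        \<and> ((i + 1 < j \<or> j + 1 < i) \<longrightarrow> T i (T j x) = T j (T i x))"
    if ij: "1 \<le> i" "i \<le> d - 1" "1 \<le> j" "j \<le> d - 1" and x: "x \<in> tensor_space n d" for i j x
  proof -
    have E: "x = (\<lambda>s. \<Sum>r\<in>U. x r * bvec r s)" using expand[OF x] unfolding U_def .
    have quad: "T i (T i (bvec r)) = (\<lambda>s. (qv * qt - inverse qv * qt) * T i (bvec r) s + qt ^ 2 * bvec r s)"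
      if r: "r \<in> U" for r
    proof -
      have len: "length r = d" using r unfolding U_def tuples_def by auto
      define R where "R = r[i-1:=r!(i-1), i:=r!i]"
      have rr: "r = R" unfolding R_def by simp
      show ?thesis unfolding TA
        apply (simp only: rr)
        apply (simp only: R_def)
        apply (rule quad_basis[OF qv_nz fU, where S="{1..n}" and P="\<lambda>x y. r[i-1:=x, i:=y]" and a="r!(i-1)" and b="r!i"])
        using ij len r P2[of i r] nth_tuples[of r n d]
        by (auto simp: U_def intro!: upd_tuples)
    qed
    have braid: "T i (T j (T i (bvec r))) = T j (T i (T j (bvec r)))" if r: "r \<in> U" and j: "j = i + 1" for r
    proof -
      have len: "length r = d" using r unfolding U_def tuples_def by auto
      define R where "R = r[i-1:=r!(i-1), i:=r!i, Suc i:=r!Suc i]"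
      have rr: "r = R" unfolding R_def by simp
      show ?thesis unfolding TA j Suc_eq_plus1[symmetric]
        apply (simp only: rr)
        apply (simp only: R_def)
        apply (rule braid_basis[OF qv_nz fU, where S="{1..n}" and P="\<lambda>x y z. r[i-1:=x, i:=y, Suc i:=z]" and a="r!(i-1)" and b="r!i" and c="r!Suc i"])
        using ij len r P3[of i r] nth_tuples[of r n d] j
        by (auto simp: U_def intro!: upd_tuples)
    qed
    have far: "T i (T j (bvec r)) = T j (T i (bvec r))" if r: "r \<in> U" and ij2: "i + 1 < j \<or> j + 1 < i" for r
    proof -
      have len: "length r = d" using r unfolding U_def tuples_def by auto
      show ?thesis
      proof (cases "i + 1 < j")
        case True
        define R where "R = r[i-1:=r!(i-1), i:=r!i, j-1:=r!(j-1), j:=r!j]"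
        have rr: "r = R" unfolding R_def by simp
        show ?thesis unfolding TA
          apply (simp only: rr)
        apply (simp only: R_def)
          apply (rule far_basis[OF qv_nz fU, where S="{1..n}" and P="\<lambda>x y z w. r[i-1:=x, i:=y, j-1:=z, j:=w]" and a="r!(i-1)" and b="r!i" and c="r!(j-1)" and e="r!j"])
          using ij len r P4[of i j r] nth_tuples[of r n d] True
          by (auto simp: U_def intro!: upd_tuples)
      next
        case False
        then have F: "j + 1 < i" using ij2 by simp
        define R where "R = r[j-1:=r!(j-1), j:=r!j, i-1:=r!(i-1), i:=r!i]"
        have rr: "r = R" unfolding R_def by simp
        show ?thesis unfolding TA
          apply (simp only: rr)
        apply (simp only: R_def)
          apply (rule far_basis[OF qv_nz fU, where S="{1..n}" and P="\<lambda>x y z w. r[j-1:=x, j:=y, i-1:=z, i:=w]" and a="r!(j-1)" and b="r!j" and c="r!(i-1)" and e="r!i", symmetric])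
          using ij len r P4[of j i r] nth_tuples[of r n d] F
          by (auto simp: U_def intro!: upd_tuples)
      qed
    qed
    have L1: "T i (T i x) = (\<lambda>s. \<Sum>r\<in>U. x r * T i (T i (bvec r)) s)"
      by (subst E) (simp only: S)
    have L1b: "T i x = (\<lambda>s. \<Sum>r\<in>U. x r * T i (bvec r) s)"
      by (subst E) (simp only: S)
    have L2: "T i (T j (T i x)) = (\<lambda>s. \<Sum>r\<in>U. x r * T i (T j (T i (bvec r))) s)"
      by (subst E) (simp only: S)
    have L3: "T j (T i (T j x)) = (\<lambda>s. \<Sum>r\<in>U. x r * T j (T i (T j (bvec r))) s)"
      by (subst E) (simp only: S)
    have L4: "T i (T j x) = (\<lambda>s. \<Sum>r\<in>U. x r * T i (T j (bvec r)) s)"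
      by (subst E) (simp only: S)
    have L5: "T j (T i x) = (\<lambda>s. \<Sum>r\<in>U. x r * T j (T i (bvec r)) s)"
      by (subst E) (simp only: S)
    have Q: "T i (T i x) = (\<lambda>s. (qv * qt - inverse qv * qt) * T i x s + qt ^ 2 * x s)"
    proof (rule ext)
      fix s
      have "T i (T i x) s = (\<Sum>r\<in>U. x r * ((qv * qt - inverse qv * qt) * T i (bvec r) s + qt ^ 2 * bvec r s))"
        unfolding L1 by (intro sum.cong refl) (simp add: quad)
      also have "\<dots> = (\<Sum>r\<in>U. (qv * qt - inverse qv * qt) * (x r * T i (bvec r) s) + qt ^ 2 * (x r * bvec r s))"
        by (intro sum.cong refl) (simp add: algebra_simps)
      also have "\<dots> = (qv * qt - inverse qv * qt) * T i x s + qt ^ 2 * (\<Sum>r\<in>U. x r * bvec r s)"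
        unfolding L1b by (simp only: sum.distrib sum_distrib_left)
      also have "(\<Sum>r\<in>U. x r * bvec r s) = x s" using fun_cong[OF E, of s] by simp
      finally show "T i (T i x) s = (qv * qt - inverse qv * qt) * T i x s + qt ^ 2 * x s" .
    qed
    show ?thesis
    proof (intro conjI impI)
      show "T i (T i x) = (\<lambda>s. (qv * qt - inverse qv * qt) * T i x s + qt ^ 2 * x s)" by (rule Q)
    next
      assume "j = i + 1"
      then show "T i (T j (T i x)) = T j (T i (T j x))"
        unfolding L2 L3 using braid by (simp add: fun_eq_iff)
    next
      assume "i + 1 < j \<or> j + 1 < i"
      then show "T i (T j x) = T j (T i x)"
        unfolding L4 L5 using far by (simp add: fun_eq_iff)
    qed
  qed
  show ?thesis using part1 part2 by blast
qed

end
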